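(* Let $n\ge 3$ and let $W_n^0$ be the wheel graph: vertex set $\{0,1,\dots,n\}$, edges $\{i,i+1\}$ for $1\le i<n$, the edge $\{n,1\}$, and the edges $\{0,i\}$ for $i\in[n]$ (all simple), rooted at the sink $0$. A configuration $c=(c_1,\dots,c_n)$ on $W_n^0$ is strongly recurrent if and only if $c\in\{1,2\}^n$ and $|\{i\in[n]: c_i=1\}|\le 1$. In particular $|\mathrm{SR}(W_n^0)|=|\mathrm{PPF}(W_n^0)|=n+1$.
   Context: For a rooted graph $G=(\Gamma,s)$ (finite, undirected, loopless multigraph with sink $s$), $V$ is the vertex set, $\tilde V=V\setminus\{s\}$, $\mathrm{mult}(vw)$ the number of edges between $v,w$, $\deg^A(v)=\sum_{w\in A}\mathrm{mult}(vw)$, $\deg(v)=\deg^V(v)$, $\mathbf 1_w$ the indicator of $w$. A configuration is $c:\tilde V\to\mathbb{Z}$ (written $c_i=c(i)$); stable if $c(v)<\deg(v)$ for all $v$. A stable $c$ is recurrent if there is no nonempty $F\subseteq\tilde V$ with $c(v)<\deg^F(v)$ for all $v\in F$. $V_M(c)=\{v\in\tilde V: c(v)\ge\deg(v)-\mathrm{mult}(vs)\}$; $c^{v-}=c-\sum_{w\in\tilde V\setminus\{v\}}\mathrm{mult}(ws)\mathbf 1_w$. A recurrent $c$ is strongly recurrent if $c^{v-}$ is recurrent for all $v\in V_M(c)$; $\mathrm{SR}(G)$ is their set. A $G$-parking function is $p:\tilde V\to\{1,2,\dots\}$ such that every nonempty $S\subseteq\tilde V$ contains $v$ with $p(v)\le\deg^{V\setminus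 S}(v)$. With $G^A$ the induced subgraph on $A\cup\{s\}$ rooted at $s$, $p$ is decomposable w.r.t. an ordered partition $(A,B)$ of $\tilde V$ into nonempty blocks if $p|_A$ is a $G^A$-parking function and $v\mapsto p(v)-\deg^A(v)$ on $B$ is a $G^B$-parking function; $p$ is prime if it is decomposable w.r.t. no such partition; $\mathrm{PPF}(G)$ is the set of prime $G$-parking functions. *)

theory Defs
  imports Main
begin

text \<open>A rooted multigraph is given by a finite vertex set V (of naturals), a sink s \<in> V,
  and a symmetric edge multiplicity function mult (mult v v = 0).
  Configurations and parking functions are functions nat \<Rightarrow> int; only their values
  on V - {s} matter for the predicates.  For the sets SR and PPF we require the value 0
  outside V - {s} so that each object on V - {s} is represented exactly once.\<close>

definition degA :: "(nat \<Rightarrow> nat \<Rightarrow> nat) \<Rightarrow> nat set \<Rightarrow> nat \<Rightarrow> int" where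
  "degA mult A v = (\<Sum>w\<in>A. int (mult v w))"

definition stable_cfg :: "nat set \<Rightarrow> nat \<Rightarrow> (nat \<Rightarrow> nat \<Rightarrow> nat) \<Rightarrow> (nat \<Rightarrow> int) \<Rightarrow> bool" where
  "stable_cfg V s mult c \<longleftrightarrow> (\<forall>v\<in>V - {s}. c v < degA mult V v)"

definition recurrent_cfg :: "nat set \<Rightarrow> nat \<Rightarrow> (nat \<Rightarrow> nat \<Rightarrow> nat) \<Rightarrow> (nat \<Rightarrow> int) \<Rightarrow> bool" where
  "recurrent_cfg V s mult c \<longleftrightarrow> stable_cfg V s mult c \<and>
     \<not> (\<exists>F. F \<noteq> {} \<and> F \<subseteq> V - {s} \<and> (\<forall>v\<in>F. c v < degA mult F v))"

definition VM :: "nat set \<Rightarrow> nat \<Rightarrow> (nat \<Rightarrow> nat \<Rightarrow> nat) \<Rightarrow> (nat \<Rightarrow> int) \<Rightarrow> nat set" where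
  "VM V s mult c = {v \<in> V - {s}. c v \<ge> degA mult V v - int (mult v s)}"

definition cfg_minus :: "nat set \<Rightarrow> nat \<Rightarrow> (nat \<Rightarrow> nat \<Rightarrow> nat) \<Rightarrow> (nat \<Rightarrow> int) \<Rightarrow> nat \<Rightarrow> (nat \<Rightarrow> int)" where
  "cfg_minus V s mult c v = (\<lambda>u. c u - (\<Sum>w\<in>V - {s} - {v}. int (mult w s) * (if u = w then 1 else 0)))"

definition strongly_recurrent :: "nat set \<Rightarrow> nat \<Rightarrow> (nat \<Rightarrow> nat \<Rightarrow> nat) \<Rightarrow> (nat \<Rightarrow> int) \<Rightarrow> bool" where
  "strongly_recurrent V s mult c \<longleftrightarrow> recurrent_cfg V s mult c \<and>
     (\<forall>v\<in>VM V s mult c. recurrent_cfg V s mult (cfg_minus V s mult c v))"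

definition SR :: "nat set \<Rightarrow> nat \<Rightarrow> (nat \<Rightarrow> nat \<Rightarrow> nat) \<Rightarrow> (nat \<Rightarrow> int) set" where
  "SR V s mult = {c. strongly_recurrent V s mult c \<and> (\<forall>u. u \<notin> V - {s} \<longrightarrow> c u = 0)}"

definition parking_fn :: "nat set \<Rightarrow> nat \<Rightarrow> (nat \<Rightarrow> nat \<Rightarrow> nat) \<Rightarrow> (nat \<Rightarrow> int) \<Rightarrow> bool" where
  "parking_fn V s mult p \<longleftrightarrow> (\<forall>v\<in>V - {s}. p v \<ge> 1) \<and>
     (\<forall>S. S \<noteq> {} \<and> S \<subseteq> V - {s} \<longrightarrow> (\<exists>v\<in>S. p v \<le> degA mult (V - S) v))"

text \<open>Decomposability w.r.t. the ordered partition (A,B) of V - {s}; the induced subgraph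
  G^A has vertex set A \<union> {s} (multiplicities inherited), rooted at s.\<close>
definition decomposable :: "nat set \<Rightarrow> nat \<Rightarrow> (nat \<Rightarrow> nat \<Rightarrow> nat) \<Rightarrow> (nat \<Rightarrow> int) \<Rightarrow> nat set \<Rightarrow> nat set \<Rightarrow> bool" where
  "decomposable V s mult p A B \<longleftrightarrow> A \<noteq> {} \<and> B \<noteq> {} \<and> A \<inter> B = {} \<and> A \<union> B = V - {s} \<and>
     parking_fn (A \<union> {s}) s mult p \<and>
     parking_fn (B \<union> {s}) s mult (\<lambda>v. p v - degA mult A v)"

definition prime_parking_fn :: "nat set \<Rightarrow> nat \<Rightarrow> (nat \<Rightarrow> nat \<Rightarrow> nat) \<Rightarrow> (nat \<Rightarrow> int) \<Rightarrow> bool" where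
  "prime_parking_fn V s mult p \<longleftrightarrow> parking_fn V s mult p \<and>
     \<not> (\<exists>A B. decomposable V s mult p A B)"

definition PPF :: "nat set \<Rightarrow> nat \<Rightarrow> (nat \<Rightarrow> nat \<Rightarrow> nat) \<Rightarrow> (nat \<Rightarrow> int) set" where
  "PPF V s mult = {p. prime_parking_fn V s mult p \<and> (\<forall>u. u \<notin> V - {s} \<longrightarrow> p u = 0)}"

definition wheel_mult :: "nat \<Rightarrow> nat \<Rightarrow> nat \<Rightarrow> nat" where
  "wheel_mult n i j =
     (if (i = 0 \<and> 1 \<le> j \<and> j \<le> n) \<or> (j = 0 \<and> 1 \<le> i \<and> i \<le> n) \<or>
         (1 \<le> i \<and> i \<le> n \<and> 1 \<le> j \<and> j \<le> n \<and>
           (j = i + 1 \<or> i = j + 1 \<or> (i = 1 \<and> j = n) \<or> (i = n \<and> j = 1)))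
      then 1 else 0)"

end

theory Submission
  imports Defs
begin

definition sc :: "nat \<Rightarrow> nat \<Rightarrow> nat" where "sc n w = (if w = n then 1 else w + 1)"
definition pw :: "nat \<Rightarrow> nat \<Rightarrow> nat" where "pw n w = (if w = 1 then n else w - 1)"

lemma sc_in: "1 \<le> w \<Longrightarrow> w \<le> n \<Longrightarrow> 1 \<le> sc n w \<and> sc n w \<le> n"
  by (auto simp: sc_def)
lemma pw_in: "1 \<le> w \<Longrightarrow> w \<le> n \<Longrightarrow> 1 \<le> pw n w \<and> pw n w \<le> n"
  by (auto simp: pw_def)

lemma mult_char:
  assumes "n \<ge> 3" "1 \<le> w" "w \<le> n"
  shows "wheel_mult n w x = (if x = 0 \<or> x = pw n w \<or> x = sc n w then 1 else 0)"
  using assms unfolding wheel_mult_def pw_def sc_def by auto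

lemma mult_sym: "wheel_mult n x y = wheel_mult n y x"
  unfolding wheel_mult_def by auto

lemma distinct3:
  assumes "n \<ge> 3" "1 \<le> w" "w \<le> n"
  shows "pw n w \<noteq> sc n w" "pw n w \<noteq> 0" "sc n w \<noteq> 0" "pw n w \<noteq> w" "sc n w \<noteq> w"
  using assms unfolding pw_def sc_def by auto

lemma deg_wheel:
  assumes "n \<ge> 3" "1 \<le> w" "w \<le> n" "finite F"
  shows "degA (wheel_mult n) F w = (if 0 \<in> F then 1 else 0) + (if pw n w \<in> F then 1 else 0)
          + (if sc n w \<in> F then 1 else 0)"
proof -
  have "degA (wheel_mult n) F w = (\<Sum>x\<in>F. (if x = 0 then 1 else 0) + (if x = pw n w then 1 else 0)
          + (if x = sc n w then (1::int) else 0))"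
    unfolding degA_def
    apply (rule sum.cong[OF refl])
    using mult_char[OF assms(1-3)] distinct3[OF assms(1-3)] by auto
  also have "\<dots> = (if 0 \<in> F then 1 else 0) + (if pw n w \<in> F then 1 else 0)
          + (if sc n w \<in> F then 1 else 0)"
    using assms(4) by (simp add: sum.distrib)
  finally show ?thesis .
qed

lemma sc_closed:
  assumes "X \<subseteq> {1..n}" "X \<noteq> {}" "\<forall>x\<in>X. sc n x \<in> X"
  shows "X = {1..n}"
proof -
  obtain b where b: "b \<in> X" using assms(2) by auto
  have up: "\<And>d. a \<in> X \<Longrightarrow> a + d \<le> n \<Longrightarrow> a + d \<in> X" for a
  proof -
    fix d show "a \<in> X \<Longrightarrow> a + d \<le> n \<Longrightarrow> a + d \<in> X"
    proof (induction d)
      case 0 then show ?case by simp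
    next
      case (Suc d)
      then have "a + d \<in> X" by simp
      with assms(3) have "sc n (a + d) \<in> X" by blast
      moreover have "a + d \<noteq> n" using Suc by simp
      ultimately show ?case by (simp add: sc_def)
    qed
  qed
  have bn: "b \<le> n" "1 \<le> b" using b assms(1) by auto
  have "n \<in> X" using up[OF b, of "n - b"] bn by simp
  then have "sc n n \<in> X" using assms(3) by blast
  then have one: "1 \<in> X" by (simp add: sc_def)
  show ?thesis
  proof
    show "{1..n} \<subseteq> X"
    proof
      fix x assume "x \<in> {1..n}"
      then show "x \<in> X" using up[OF one, of "x - 1"] by simp
    qed
  qed (use assms(1) in auto)
qed

lemma pw_closed:
  assumes "X \<subseteq> {1..n}" "X \<noteq> {}" "\<forall>x\<in>X. pw n x \<in> X"
  shows "X = {1..n}"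
proof -
  obtain b where b: "b \<in> X" using assms(2) by auto
  have dn: "\<And>d. a \<in> X \<Longrightarrow> d < a \<Longrightarrow> a - d \<in> X" for a
  proof -
    fix d show "a \<in> X \<Longrightarrow> d < a \<Longrightarrow> a - d \<in> X"
    proof (induction d)
      case 0 then show ?case by simp
    next
      case (Suc d)
      then have "a - d \<in> X" by simp
      with assms(3) have "pw n (a - d) \<in> X" by blast
      moreover have "a - d \<noteq> 1" using Suc by simp
      ultimately show ?case using Suc by (simp add: pw_def)
    qed
  qed
  have bn: "b \<le> n" "1 \<le> b" using b assms(1) by auto
  have "1 \<in> X" using dn[OF b, of "b - 1"] bn by simp
  then have "pw n 1 \<in> X" using assms(3) by blast
  then have nX: "n \<in> X" by (simp add: pw_def)
  show ?thesis
  proof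
    show "{1..n} \<subseteq> X"
    proof
      fix x assume "x \<in> {1..n}"
      then show "x \<in> X" using dn[OF nX, of "n - x"] by simp
    qed
  qed (use assms(1) in auto)
qed

lemma Vm0: "{0..n::nat} - {0} = {1..n}" by auto

lemma degV: "n \<ge> 3 \<Longrightarrow> w \<in> {1..n} \<Longrightarrow> degA (wheel_mult n) {0..n} w = 3"
  using deg_wheel[of n w "{0..n}"] sc_in[of w n] pw_in[of w n] by auto

lemma degR: "n \<ge> 3 \<Longrightarrow> w \<in> {1..n} \<Longrightarrow> degA (wheel_mult n) {1..n} w = 2"
  using deg_wheel[of n w "{1..n}"] sc_in[of w n] pw_in[of w n] by auto

lemma deg_self: "n \<ge> 3 \<Longrightarrow> w \<in> {1..n} \<Longrightarrow> degA (wheel_mult n) {w} w = 0"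
  using deg_wheel[of n w "{w}"] distinct3[of n w] by auto

lemma deg_le2: "n \<ge> 3 \<Longrightarrow> w \<in> {1..n} \<Longrightarrow> finite F \<Longrightarrow> 0 \<notin> F \<Longrightarrow> degA (wheel_mult n) F w \<le> 2"
  using deg_wheel[of n w F] by auto

lemma mult_w0: "n \<ge> 3 \<Longrightarrow> w \<in> {1..n} \<Longrightarrow> wheel_mult n w 0 = 1"
  using mult_char[of n w 0] by auto

lemma cm: assumes "n \<ge> 3"
  shows "cfg_minus {0..n} 0 (wheel_mult n) c v u = c u - (if u \<in> {1..n} - {v} then 1 else 0)"
proof -
  have "(\<Sum>w\<in>{0..n} - {0} - {v}. int (wheel_mult n w 0) * (if u = w then 1 else 0))
      = (\<Sum>w\<in>{1..n} - {v}. (if u = w then 1 else 0))"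
    by (rule sum.cong) (use mult_w0[OF assms] in auto)
  also have "\<dots> = (if u \<in> {1..n} - {v} then 1 else 0)" by simp
  finally show ?thesis unfolding cfg_minus_def by simp
qed

lemma VM_eq: "n \<ge> 3 \<Longrightarrow> VM {0..n} 0 (wheel_mult n) c = {v\<in>{1..n}. c v \<ge> 2}"
  unfolding VM_def using degV mult_w0 by (auto simp: Vm0)

lemma rec_nonneg:
  assumes "n \<ge> 3" "recurrent_cfg {0..n} 0 (wheel_mult n) c" "v \<in> {1..n}"
  shows "c v \<ge> 0"
proof (rule ccontr)
  assume "\<not> c v \<ge> 0"
  then have "\<forall>u\<in>{v}. c u < degA (wheel_mult n) {v} u" using deg_self[OF assms(1,3)] by auto
  moreover have "{v} \<subseteq> {0..n} - {0}" "{v} \<noteq> {}" using assms(3) by auto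
  ultimately show False using assms(2) unfolding recurrent_cfg_def by blast
qed

lemma rec_stable:
  assumes "n \<ge> 3" "recurrent_cfg {0..n} 0 (wheel_mult n) c" "v \<in> {1..n}"
  shows "c v \<le> 2"
proof -
  have "c v < degA (wheel_mult n) {0..n} v"
    using assms(2,3) unfolding recurrent_cfg_def stable_cfg_def by (auto simp: Vm0)
  then show ?thesis using degV[OF assms(1,3)] by simp
qed

lemma rec_has2:
  assumes "n \<ge> 3" "recurrent_cfg {0..n} 0 (wheel_mult n) c"
  shows "\<exists>v\<in>{1..n}. c v \<ge> 2"
proof (rule ccontr)
  assume "\<not> ?thesis"
  then have "\<forall>u\<in>{1..n}. c u < degA (wheel_mult n) {1..n} u" using degR[OF assms(1)] by force
  moreover have "{1..n} \<noteq> {}" using assms(1) by auto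
  moreover have "{1..n} \<subseteq> {0..n} - {0}" by auto
  ultimately show False using assms(2) unfolding recurrent_cfg_def by blast
qed

lemma two_zeros_bad:
  fixes d :: "nat \<Rightarrow> int"
  assumes n: "n \<ge> 3" and ab: "a < b" "1 \<le> a" "b \<le> n" and v: "v \<in> {1..n}" "v \<noteq> a" "v \<noteq> b"
    and da: "d a = 0" and db: "d b = 0" and dle: "\<forall>u\<in>{1..n} - {v}. d u \<le> 1"
  shows "\<exists>F. F \<noteq> {} \<and> F \<subseteq> {0..n} - {0} \<and> (\<forall>u\<in>F. d u < degA (wheel_mult n) F u)"
proof (cases "v < a \<or> b < v")
  case True
  let ?F = "{a..b}"
  have "\<forall>u\<in>?F. d u < degA (wheel_mult n) ?F u"
  proof
    fix u assume u: "u \<in> ?F"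
    have uR: "1 \<le> u" "u \<le> n" using u ab by auto
    have dg: "degA (wheel_mult n) ?F u = (if 0 \<in> ?F then 1 else 0) + (if pw n u \<in> ?F then 1 else 0)
          + (if sc n u \<in> ?F then 1 else 0)" using deg_wheel[OF n uR] by simp
    have "u \<noteq> v" using u True by auto
    then have "d u \<le> 1" using dle uR by auto
    show "d u < degA (wheel_mult n) ?F u"
    proof (cases "u = a \<or> u = b")
      case True
      then have "d u = 0" using da db by auto
      moreover have "pw n u \<in> ?F \<or> sc n u \<in> ?F" using True ab n unfolding pw_def sc_def by auto
      ultimately show ?thesis unfolding dg by auto
    next
      case False
      then have "pw n u \<in> ?F \<and> sc n u \<in> ?F" using u ab n unfolding pw_def sc_def by auto
      then show ?thesis unfolding dg using \<open>d u \<le> 1\<close> by auto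
    qed
  qed
  then show ?thesis using ab by (intro exI[of _ ?F]) auto
next
  case False
  then have av: "a < v" "v < b" using v by auto
  let ?F = "{b..n} \<union> {1..a}"
  have "\<forall>u\<in>?F. d u < degA (wheel_mult n) ?F u"
  proof
    fix u assume u: "u \<in> ?F"
    have uR: "1 \<le> u" "u \<le> n" using u ab by auto
    have dg: "degA (wheel_mult n) ?F u = (if 0 \<in> ?F then 1 else 0) + (if pw n u \<in> ?F then 1 else 0)
          + (if sc n u \<in> ?F then 1 else 0)" using deg_wheel[OF n uR] by simp
    have "u \<noteq> v" using u av by auto
    then have "d u \<le> 1" using dle uR by auto
    show "d u < degA (wheel_mult n) ?F u"
    proof (cases "u = a \<or> u = b")
      case True
      then have "d u = 0" using da db by auto
      moreover have "pw n u \<in> ?F \<or> sc n u \<in> ?F" using True ab n av unfolding pw_def sc_def by auto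
      ultimately show ?thesis unfolding dg by auto
    next
      case False
      then have "pw n u \<in> ?F \<and> sc n u \<in> ?F" using u ab n av unfolding pw_def sc_def by auto
      then show ?thesis unfolding dg using \<open>d u \<le> 1\<close> by auto
    qed
  qed
  then show ?thesis using ab by (intro exI[of _ ?F]) auto
qed

lemma sr_fwd:
  assumes n: "n \<ge> 3" and sr: "strongly_recurrent {0..n} 0 (wheel_mult n) c"
  shows "(\<forall>i\<in>{1..n}. c i \<in> {1, 2}) \<and> card {i \<in> {1..n}. c i = 1} \<le> 1"
proof -
  let ?M = "wheel_mult n"
  have rec: "recurrent_cfg {0..n} 0 ?M c" using sr unfolding strongly_recurrent_def by blast
  obtain v where v: "v \<in> {1..n}" "c v \<ge> 2" using rec_has2[OF n rec] by blast
  have cv: "c v = 2" using rec_stable[OF n rec v(1)] v(2) by simp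
  have "v \<in> VM {0..n} 0 ?M c" unfolding VM_eq[OF n] using v by simp
  then have rec': "recurrent_cfg {0..n} 0 ?M (cfg_minus {0..n} 0 ?M c v)"
    using sr unfolding strongly_recurrent_def by blast
  have ge1: "c u \<ge> 1" if "u \<in> {1..n}" for u
  proof (cases "u = v")
    case True then show ?thesis using cv by simp
  next
    case False
    have "cfg_minus {0..n} 0 ?M c v u \<ge> 0" using rec_nonneg[OF n rec' that] .
    then show ?thesis using cm[OF n, of c v u] False that by simp
  qed
  have vals: "\<forall>i\<in>{1..n}. c i \<in> {1, 2}"
  proof
    fix i assume i: "i \<in> {1..n}"
    have "c i \<ge> 1" "c i \<le> 2" using ge1[OF i] rec_stable[OF n rec i] by auto
    then show "c i \<in> {1, 2}" by auto
  qed
  have "card {i \<in> {1..n}. c i = 1} \<le> 1"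
  proof (rule ccontr)
    assume "\<not> ?thesis"
    then have "\<not> (\<forall>x\<in>{i \<in> {1..n}. c i = 1}. \<forall>y\<in>{i \<in> {1..n}. c i = 1}. x = y)"
      using card_le_Suc0_iff_eq[of "{i \<in> {1..n}. c i = 1}"] by simp
    then obtain x y where xy: "x \<in> {1..n}" "y \<in> {1..n}" "c x = 1" "c y = 1" "x \<noteq> y" by blast
    define a where "a = min x y"
    define b where "b = max x y"
    have ab: "a < b" "1 \<le> a" "b \<le> n" "c a = 1" "c b = 1"
      using xy unfolding a_def b_def by auto
    have vab: "v \<noteq> a" "v \<noteq> b" using ab cv by auto
    let ?d = "cfg_minus {0..n} 0 ?M c v"
    have d0: "?d a = 0" "?d b = 0" using ab vab by (simp_all add: cm[OF n])
    moreover have d1: "\<forall>u\<in>{1..n} - {v}. ?d u \<le> 1"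
    proof
      fix u assume u: "u \<in> {1..n} - {v}"
      show "?d u \<le> 1" using rec_stable[OF n rec, of u] u by (simp add: cm[OF n])
    qed
    have "\<exists>F. F \<noteq> {} \<and> F \<subseteq> {0..n} - {0} \<and> (\<forall>u\<in>F. ?d u < degA ?M F u)"
      by (rule two_zeros_bad[OF n ab(1-3) v(1) vab d0 d1])
    then obtain F where "F \<noteq> {} \<and> F \<subseteq> {0..n} - {0} \<and> (\<forall>u\<in>F. ?d u < degA ?M F u)" by blast
    then show False using rec' unfolding recurrent_cfg_def by blast
  qed
  with vals show ?thesis by blast
qed

lemma sr_bwd:
  assumes n: "n \<ge> 3" and vals: "\<forall>i\<in>{1..n}. c i \<in> {1, 2}" and cd: "card {i \<in> {1..n}. c i = 1} \<le> 1"
  shows "strongly_recurrent {0..n} 0 (wheel_mult n) c"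
proof -
  let ?M = "wheel_mult n"
  have uniq: "x = y" if "x \<in> {1..n}" "y \<in> {1..n}" "c x = 1" "c y = 1" for x y
    using cd card_le_Suc0_iff_eq[of "{i \<in> {1..n}. c i = 1}"] that by auto
  have stab: "stable_cfg {0..n} 0 ?M c"
    unfolding stable_cfg_def Vm0 using vals degV[OF n] by fastforce
  have rec: "recurrent_cfg {0..n} 0 ?M c"
    unfolding recurrent_cfg_def
  proof (intro conjI stab notI)
    assume "\<exists>F. F \<noteq> {} \<and> F \<subseteq> {0..n} - {0} \<and> (\<forall>v\<in>F. c v < degA ?M F v)"
    then obtain F where F: "F \<noteq> {}" "F \<subseteq> {1..n}" "\<forall>v\<in>F. c v < degA ?M F v" by (auto simp: Vm0)
    have fin: "finite F" "0 \<notin> F" using F(2) finite_subset by auto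
    have one: "c u = 1" if "u \<in> F" for u
    proof -
      have "degA ?M F u \<le> 2" using deg_le2[OF n _ fin] that F(2) by auto
      then show ?thesis using F(3) that vals F(2) by fastforce
    qed
    obtain u where u: "u \<in> F" using F(1) by auto
    have uR: "1 \<le> u" "u \<le> n" using u F(2) by auto
    have "pw n u \<notin> F"
    proof
      assume "pw n u \<in> F"
      then have "pw n u = u" using uniq[of "pw n u" u] one[of "pw n u"] one[OF u] u F(2) by blast
      then show False using distinct3[OF n uR] by simp
    qed
    moreover have "sc n u \<notin> F"
    proof
      assume "sc n u \<in> F"
      then have "sc n u = u" using uniq[of "sc n u" u] one[of "sc n u"] one[OF u] u F(2) by blast
      then show False using distinct3[OF n uR] by simp
    qed
    ultimately have "degA ?M F u = 0" using deg_wheel[OF n uR fin(1)] fin(2) by simp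
    then show False using F(3) u one[OF u] by auto
  qed
  have sr2: "recurrent_cfg {0..n} 0 ?M (cfg_minus {0..n} 0 ?M c v)" if v: "v \<in> VM {0..n} 0 ?M c" for v
  proof -
    let ?d = "cfg_minus {0..n} 0 ?M c v"
    have vR: "v \<in> {1..n}" "c v \<ge> 2" using v unfolding VM_eq[OF n] by auto
    have "c v \<in> {1,2}" using vR vals by blast
    then have dv: "?d v = 2" using vR by (auto simp: cm[OF n])
    have du: "?d u = c u - 1" if "u \<in> {1..n}" "u \<noteq> v" for u using that by (simp add: cm[OF n])
    have stab': "stable_cfg {0..n} 0 ?M ?d"
      unfolding stable_cfg_def Vm0
    proof
      fix u assume u: "u \<in> {1..n}"
      have "c u \<in> {1,2}" using u vals by blast
      then have "?d u \<le> 2" using u dv du by (cases "u = v") auto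
      then show "?d u < degA ?M {0..n} u" using degV[OF n u] by simp
    qed
    show ?thesis
      unfolding recurrent_cfg_def
    proof (intro conjI stab' notI)
      assume "\<exists>F. F \<noteq> {} \<and> F \<subseteq> {0..n} - {0} \<and> (\<forall>u\<in>F. ?d u < degA ?M F u)"
      then obtain F where F: "F \<noteq> {}" "F \<subseteq> {1..n}" "\<forall>u\<in>F. ?d u < degA ?M F u" by (auto simp: Vm0)
      have fin: "finite F" "0 \<notin> F" using F(2) finite_subset by auto
      have vF: "v \<notin> F"
      proof
        assume "v \<in> F"
        then show False using F(3) dv deg_le2[OF n vR(1) fin] by fastforce
      qed
      have two: "pw n u \<in> F \<and> sc n u \<in> F" if "u \<in> F" "c u = 2" for u
      proof -
        have uR: "1 \<le> u" "u \<le> n" using that F(2) by auto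
        have "?d u = 1" using du[of u] that vF uR by auto
        then have "1 < degA ?M F u" using F(3) that by auto
        then show ?thesis using deg_wheel[OF n uR fin(1)] fin(2) by (auto split: if_splits)
      qed
      have "F \<noteq> {1..n}" using vF vR by auto
      then obtain x where x: "x \<in> F" "sc n x \<notin> F" using sc_closed[OF F(2) F(1)] by blast
      have cx: "c x = 1" using two[OF x(1)] x vals F(2) by blast
      obtain y where y: "y \<in> F" "pw n y \<notin> F" using pw_closed[OF F(2) F(1)] \<open>F \<noteq> {1..n}\<close> by blast
      have cy: "c y = 1" using two[OF y(1)] y vals F(2) by blast
      have "x = y" using uniq[OF _ _ cx cy] x(1) y(1) F(2) by blast
      have xR: "1 \<le> x" "x \<le> n" using x F(2) by auto
      have "degA ?M F x = 0" using deg_wheel[OF n xR fin(1)] fin(2) x y \<open>x = y\<close> by simp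
      moreover have "?d x = 0" using du[of x] xR cx x vF by auto
      ultimately show False using F(3) x by auto
    qed
  qed
  show ?thesis unfolding strongly_recurrent_def using rec sr2 by blast
qed

lemma degA_reindex:
  assumes "inj \<tau>" "\<forall>x y. M (\<tau> x) (\<tau> y) = M x y"
  shows "degA M (\<tau> ` X) (\<tau> u) = degA M X u"
proof -
  have "degA M (\<tau> ` X) (\<tau> u) = (\<Sum>x\<in>X. int (M (\<tau> u) (\<tau> x)))"
    unfolding degA_def by (rule sum.reindex[unfolded comp_def]) (use assms(1) in \<open>auto intro: inj_on_subset\<close>)
  then show ?thesis using assms(2) unfolding degA_def by simp
qed

lemma inj0: "inj \<tau> \<Longrightarrow> \<tau> 0 = 0 \<Longrightarrow> v \<noteq> 0 \<Longrightarrow> \<tau> v \<noteq> (0::nat)"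
  by (metis injD)

lemma park_fwd:
  assumes pf: "parking_fn W 0 M p" and inj: "inj \<tau>" and t0: "\<tau> 0 = 0" and tW: "\<tau> ` W = W"
    and mp: "\<forall>x y. M (\<tau> x) (\<tau> y) = M x y"
  shows "parking_fn W 0 M (\<lambda>v. p (\<tau> v))"
proof -
  have pf1: "\<forall>v\<in>W - {0}. 1 \<le> p v" and
    pf2: "\<forall>S. S \<noteq> {} \<and> S \<subseteq> W - {0} \<longrightarrow> (\<exists>v\<in>S. p v \<le> degA M (W - S) v)"
    using pf unfolding parking_fn_def by blast+
  have img: "\<tau> ` (W - {0}) \<subseteq> W - {0}"
  proof
    fix y assume "y \<in> \<tau> ` (W - {0})"
    then obtain u where u: "u \<in> W" "u \<noteq> 0" "y = \<tau> u" by auto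
    have "\<tau> u \<noteq> 0" using inj0[OF inj t0 u(2)] .
    moreover have "\<tau> u \<in> W" using u(1) tW by auto
    ultimately show "y \<in> W - {0}" using u(3) by simp
  qed
  have A1: "\<forall>v\<in>W - {0}. 1 \<le> p (\<tau> v)"
  proof
    fix v assume "v \<in> W - {0}"
    then have "\<tau> v \<in> W - {0}" using img by auto
    then show "1 \<le> p (\<tau> v)" using pf1 by blast
  qed
  have A2: "\<exists>v\<in>S. p (\<tau> v) \<le> degA M (W - S) v" if S: "S \<noteq> {}" "S \<subseteq> W - {0}" for S
  proof -
    have s1: "\<tau> ` S \<noteq> {} \<and> \<tau> ` S \<subseteq> W - {0}" using S img by blast
    obtain y where y: "y \<in> \<tau> ` S" "p y \<le> degA M (W - \<tau> ` S) y"
      using pf2[rule_format, OF s1] by blast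
    then obtain u where u: "u \<in> S" "y = \<tau> u" by blast
    have e1: "W - \<tau> ` S = \<tau> ` (W - S)" using tW inj by (simp add: image_set_diff)
    have "degA M (W - \<tau> ` S) y = degA M (W - S) u"
      unfolding e1 u(2) by (rule degA_reindex[OF inj mp])
    then have "p (\<tau> u) \<le> degA M (W - S) u" using y(2) u(2) by simp
    then show ?thesis using u(1) by blast
  qed
  show ?thesis unfolding parking_fn_def using A1 A2 by blast
qed

lemma park_bwd:
  assumes pf: "parking_fn W 0 M (\<lambda>v. p (\<tau> v))" and inj: "inj \<tau>" and t0: "\<tau> 0 = 0"
    and mp: "\<forall>x y. M (\<tau> x) (\<tau> y) = M x y"
  shows "parking_fn (\<tau> ` W) 0 M p"
proof -
  have pf1: "\<forall>v\<in>W - {0}. 1 \<le> p (\<tau> v)" and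
    pf2: "\<forall>S. S \<noteq> {} \<and> S \<subseteq> W - {0} \<longrightarrow> (\<exists>v\<in>S. p (\<tau> v) \<le> degA M (W - S) v)"
    using pf unfolding parking_fn_def by blast+
  have A1: "\<forall>v\<in>\<tau> ` W - {0}. 1 \<le> p v"
  proof
    fix v assume v: "v \<in> \<tau> ` W - {0}"
    then obtain w where w: "w \<in> W" "v = \<tau> w" by blast
    have "w \<noteq> 0" proof assume "w = 0" then show False using w v t0 by simp qed
    then show "1 \<le> p v" using pf1 w by blast
  qed
  have A2: "\<exists>v\<in>S. p v \<le> degA M (\<tau> ` W - S) v" if S: "S \<noteq> {}" "S \<subseteq> \<tau> ` W - {0}" for S
  proof -
    define S' where "S' = {w \<in> W. \<tau> w \<in> S}"
    have SS': "S = \<tau> ` S'" using S(2) unfolding S'_def by blast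
    have "S' \<noteq> {}" using S(1) SS' by blast
    moreover have "S' \<subseteq> W - {0}" using S(2) t0 unfolding S'_def by blast
    ultimately obtain w where w: "w \<in> S'" "p (\<tau> w) \<le> degA M (W - S') w"
      using pf2 by blast
    have e1: "\<tau> ` (W - S') = \<tau> ` W - S" unfolding SS' using inj by (simp add: image_set_diff)
    have "degA M (W - S') w = degA M (\<tau> ` W - S) (\<tau> w)"
      unfolding e1[symmetric] by (rule degA_reindex[OF inj mp, symmetric])
    then have "p (\<tau> w) \<le> degA M (\<tau> ` W - S) (\<tau> w)" using w(2) by simp
    moreover have "\<tau> w \<in> S" using w(1) unfolding S'_def by blast
    ultimately show ?thesis by blast
  qed
  show ?thesis unfolding parking_fn_def using A1 A2 by blast
qed

lemma decomp_bwd: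
  assumes d: "decomposable V 0 M (\<lambda>v. p (\<tau> v)) A B" and inj: "inj \<tau>" and t0: "\<tau> 0 = 0"
    and tV: "\<tau> ` V = V" and mp: "\<forall>x y. M (\<tau> x) (\<tau> y) = M x y"
  shows "decomposable V 0 M p (\<tau> ` A) (\<tau> ` B)"
proof -
  have A: "A \<noteq> {}" "B \<noteq> {}" "A \<inter> B = {}" "A \<union> B = V - {0}"
    and pA: "parking_fn (A \<union> {0}) 0 M (\<lambda>v. p (\<tau> v))"
    and pB: "parking_fn (B \<union> {0}) 0 M (\<lambda>v. p (\<tau> v) - degA M A v)"
    using d unfolding decomposable_def by blast+
  have 1: "\<tau> ` A \<inter> \<tau> ` B = {}" using A(3) inj by (simp add: image_Int[symmetric])
  have "\<tau> ` A \<union> \<tau> ` B = \<tau> ` (V - {0})" using A(4) by (simp add: image_Un[symmetric])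
  also have "\<dots> = V - {0}" using tV t0 inj by (simp add: image_set_diff)
  finally have 2: "\<tau> ` A \<union> \<tau> ` B = V - {0}" .
  have 3: "parking_fn (\<tau> ` A \<union> {0}) 0 M p"
    using park_bwd[OF pA inj t0 mp] t0 by simp
  have eq: "(\<lambda>v. p (\<tau> v) - degA M A v) = (\<lambda>v. (\<lambda>w. p w - degA M (\<tau> ` A) w) (\<tau> v))"
    using degA_reindex[OF inj mp] by simp
  have 4: "parking_fn (\<tau> ` B \<union> {0}) 0 M (\<lambda>w. p w - degA M (\<tau> ` A) w)"
    using park_bwd[OF pB[unfolded eq] inj t0 mp] t0 by simp
  have 5: "\<tau> ` A \<noteq> {}" "\<tau> ` B \<noteq> {}" using A(1,2) by blast+
  show ?thesis unfolding decomposable_def using 1 2 3 4 5 by blast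
qed

lemma prime_fwd:
  assumes pp: "prime_parking_fn V 0 M p" and inj: "inj \<tau>" and t0: "\<tau> 0 = 0"
    and tV: "\<tau> ` V = V" and mp: "\<forall>x y. M (\<tau> x) (\<tau> y) = M x y"
  shows "prime_parking_fn V 0 M (\<lambda>v. p (\<tau> v))"
proof -
  have "parking_fn V 0 M p" "\<not> (\<exists>A B. decomposable V 0 M p A B)"
    using pp unfolding prime_parking_fn_def by blast+
  have "parking_fn V 0 M (\<lambda>v. p (\<tau> v))" by (rule park_fwd) fact+
  moreover have "\<not> (\<exists>A B. decomposable V 0 M (\<lambda>v. p (\<tau> v)) A B)"
  proof
    assume "\<exists>A B. decomposable V 0 M (\<lambda>v. p (\<tau> v)) A B"
    then obtain A B where "decomposable V 0 M (\<lambda>v. p (\<tau> v)) A B" by blast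
    from decomp_bwd[OF this inj t0 tV mp] show False
      using \<open>\<not> (\<exists>A B. decomposable V 0 M p A B)\<close> by blast
  qed
  ultimately show ?thesis unfolding prime_parking_fn_def by blast
qed

definition rot :: "nat \<Rightarrow> nat \<Rightarrow> nat" where
  "rot n x = (if 1 \<le> x \<and> x \<le> n then sc n x else x)"

lemma rot_R: "(1 \<le> rot n y \<and> rot n y \<le> n) = (1 \<le> y \<and> y \<le> n)"
  unfolding rot_def sc_def by auto

lemma sc_inj: "1 \<le> x \<Longrightarrow> x \<le> n \<Longrightarrow> 1 \<le> y \<Longrightarrow> y \<le> n \<Longrightarrow> sc n x = sc n y \<Longrightarrow> x = y"
  unfolding sc_def by (cases "x = n"; cases "y = n") auto

lemma rot_inj: "inj (rot n)"
proof (rule injI)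
  fix x y assume e: "rot n x = rot n y"
  show "x = y"
  proof (cases "1 \<le> x \<and> x \<le> n")
    case True
    have "1 \<le> y \<and> y \<le> n"
    proof (rule ccontr)
      assume "\<not> (1 \<le> y \<and> y \<le> n)"
      then have "rot n y = y" unfolding rot_def by (rule if_not_P)
      moreover have "rot n x = sc n x" using True unfolding rot_def by simp
      ultimately show False using e sc_in[of x n] True \<open>\<not> (1 \<le> y \<and> y \<le> n)\<close> by simp
    qed
    then show ?thesis using True e sc_inj[of x n y] unfolding rot_def by simp
  next
    case False
    have "\<not> (1 \<le> y \<and> y \<le> n)"
    proof
      assume y: "1 \<le> y \<and> y \<le> n"
      then have "rot n y = sc n y" unfolding rot_def by simp
      moreover have "rot n x = x" using False unfolding rot_def by (rule if_not_P)
      ultimately show False using e sc_in[of y n] False y by simp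
    qed
    then have "rot n y = y" unfolding rot_def by (rule if_not_P)
    moreover have "rot n x = x" using False unfolding rot_def by (rule if_not_P)
    ultimately show ?thesis using e by simp
  qed
qed

lemma mult_out: "n < x \<Longrightarrow> wheel_mult n x y = 0"
  unfolding wheel_mult_def by auto

lemma mult_zero: "wheel_mult n 0 y = (if 1 \<le> y \<and> y \<le> n then 1 else 0)"
  unfolding wheel_mult_def by auto

lemma rot_eq0: "(rot n y = 0) = (y = 0)"
  unfolding rot_def sc_def by auto

lemma rot_mult:
  assumes n: "n \<ge> 3"
  shows "wheel_mult n (rot n x) (rot n y) = wheel_mult n x y"
proof (cases "1 \<le> x \<and> x \<le> n")
  case True
  have rx: "rot n x = sc n x" using True by (simp add: rot_def)
  have sR: "1 \<le> sc n x" "sc n x \<le> n" using sc_in True by auto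
  have "wheel_mult n (rot n x) (rot n y) =
     (if rot n y = 0 \<or> rot n y = pw n (sc n x) \<or> rot n y = sc n (sc n x) then 1 else 0)"
    unfolding rx by (rule mult_char[OF n sR])
  moreover have "wheel_mult n x y = (if y = 0 \<or> y = pw n x \<or> y = sc n x then 1 else 0)"
    using mult_char[OF n] True by blast
  moreover have "(rot n y = 0 \<or> rot n y = pw n (sc n x) \<or> rot n y = sc n (sc n x))
      = (y = 0 \<or> y = pw n x \<or> y = sc n x)"
  proof -
    have e1: "pw n (sc n x) = x" using True unfolding pw_def sc_def by auto
    have e2: "(rot n y = x) = (y = pw n x)" using True unfolding rot_def sc_def pw_def
      by (cases "1 \<le> y \<and> y \<le> n") auto
    have e3: "sc n (sc n x) = rot n (sc n x)" using sR by (simp add: rot_def)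
    have e4: "(rot n y = rot n (sc n x)) = (y = sc n x)" using rot_inj by (auto dest: injD)
    show ?thesis unfolding e1 e2 e3 e4 rot_eq0 by blast
  qed
  ultimately show ?thesis by simp
next
  case False
  then have rx: "rot n x = x" unfolding rot_def by (rule if_not_P)
  show ?thesis
  proof (cases "x = 0")
    case True
    then show ?thesis using rx rot_R[of n y] by (simp add: mult_zero)
  next
    case False
    then have "n < x" using \<open>\<not> (1 \<le> x \<and> x \<le> n)\<close> by auto
    then show ?thesis using rx by (simp add: mult_out)
  qed
qed

lemma rot0: "rot n 0 = 0" by (simp add: rot_def)

lemma rot_img: "rot n ` {0..n} = {0..n}"
proof
  show "rot n ` {0..n} \<subseteq> {0..n}" by (auto simp: rot_def sc_def)
  show "{0..n} \<subseteq> rot n ` {0..n}"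
  proof
    fix y assume y: "y \<in> {0..n}"
    show "y \<in> rot n ` {0..n}"
    proof (cases "y = 0")
      case True then show ?thesis using rot0 by force
    next
      case False
      show ?thesis
      proof (cases "y = 1")
        case True
        have "rot n n = 1" using y False True by (auto simp: rot_def sc_def)
        moreover have "n \<in> {0..n}" by simp
        ultimately show ?thesis using True by (metis image_eqI)
      next
        case False
        have "rot n (y - 1) = y" using y False \<open>y \<noteq> 0\<close> by (auto simp: rot_def sc_def)
        moreover have "y - 1 \<in> {0..n}" using y by simp
        ultimately show ?thesis by (metis image_eqI)
      qed
    qed
  qed
qed

lemma rotp:
  assumes "n \<ge> 3"
  shows "inj (rot n ^^ m) \<and> (rot n ^^ m) 0 = 0 \<and> (rot n ^^ m) ` {0..n} = {0..n}
     \<and> (\<forall>x y. wheel_mult n ((rot n ^^ m) x) ((rot n ^^ m) y) = wheel_mult n x y)"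
proof (induction m)
  case 0 then show ?case by simp
next
  case (Suc m)
  have fs: "rot n ^^ Suc m = rot n \<circ> (rot n ^^ m)" by simp
  have i: "inj (rot n ^^ Suc m)" unfolding fs using Suc rot_inj inj_compose[of "rot n" "rot n ^^ m"] by blast
  have im: "(rot n ^^ Suc m) ` {0..n} = {0..n}"
    unfolding fs image_comp[symmetric] using Suc rot_img[of n] by simp
  have z: "(rot n ^^ Suc m) 0 = 0" unfolding fs using Suc rot0 by simp
  have mm: "\<forall>x y. wheel_mult n ((rot n ^^ Suc m) x) ((rot n ^^ Suc m) y) = wheel_mult n x y"
    unfolding fs using Suc rot_mult[OF assms] by simp
  show ?case using i im z mm by blast
qed

lemma rot_n: "1 \<le> m \<Longrightarrow> m \<le> n \<Longrightarrow> (rot n ^^ m) n = m"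
proof (induction m)
  case 0 then show ?case by simp
next
  case (Suc m)
  show ?case
  proof (cases "m = 0")
    case True then show ?thesis using Suc by (simp add: rot_def sc_def)
  next
    case False
    then have "(rot n ^^ m) n = m" using Suc by simp
    then show ?thesis using Suc False by (simp add: rot_def sc_def)
  qed
qed

lemma decomposable_of:
  assumes fin: "finite V" and V0: "0 \<in> V" and pf: "parking_fn V 0 M p"
    and AB: "A \<noteq> {}" "B \<noteq> {}" "A \<inter> B = {}" "A \<union> B = V - {0}"
    and pA: "parking_fn (A \<union> {0}) 0 M p"
    and qB: "\<forall>v\<in>B. p v - degA M A v \<ge> 1"
  shows "decomposable V 0 M p A B"
proof -
  have pf2: "\<forall>S. S \<noteq> {} \<and> S \<subseteq> V - {0} \<longrightarrow> (\<exists>v\<in>S. p v \<le> degA M (V - S) v)"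
    using pf unfolding parking_fn_def by blast
  have A2: "\<exists>v\<in>S. p v - degA M A v \<le> degA M ((B \<union> {0}) - S) v"
    if S: "S \<noteq> {}" "S \<subseteq> (B \<union> {0}) - {0}" for S
  proof -
    have "S \<subseteq> V - {0}" using S(2) AB(4) by blast
    then obtain v where v: "v \<in> S" "p v \<le> degA M (V - S) v" using pf2 S(1) by blast
    have e: "V - S = A \<union> ((B \<union> {0}) - S)" using AB(3,4) S(2) V0 by blast
    have d: "A \<inter> ((B \<union> {0}) - S) = {}" using AB(3,4) by blast
    have fAB: "finite (A \<union> B)" unfolding AB(4) using fin by simp
    have fA: "finite A" "finite ((B \<union> {0}) - S)" using fAB by simp_all
    have "degA M (V - S) v = degA M A v + degA M ((B \<union> {0}) - S) v"
      unfolding degA_def e by (rule sum.union_disjoint[OF fA d])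
    then have "p v - degA M A v \<le> degA M ((B \<union> {0}) - S) v" using v(2) by linarith
    then show ?thesis using v(1) by blast
  qed
  have pB: "parking_fn (B \<union> {0}) 0 M (\<lambda>v. p v - degA M A v)"
    unfolding parking_fn_def using qB A2 by blast
  show ?thesis unfolding decomposable_def using AB pA pB by blast
qed

lemma ones_park:
  assumes n: "n \<ge> 3" and A: "A \<subseteq> {1..n}" and p1: "\<forall>v\<in>A. p v = 1"
  shows "parking_fn (A \<union> {0}) 0 (wheel_mult n) p"
proof -
  have A2: "\<exists>v\<in>S. p v \<le> degA (wheel_mult n) ((A \<union> {0}) - S) v"
    if S: "S \<noteq> {}" "S \<subseteq> (A \<union> {0}) - {0}" for S
  proof -
    obtain v where v: "v \<in> S" using S(1) by blast
    have vA: "v \<in> A" using v S(2) by blast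
    have vR: "1 \<le> v" "v \<le> n" using vA A by auto
    have fin: "finite ((A \<union> {0}) - S)" using A finite_subset by blast
    have z: "0 \<in> (A \<union> {0}) - S" using S(2) by blast
    have "degA (wheel_mult n) ((A \<union> {0}) - S) v \<ge> 1"
      using deg_wheel[OF n vR fin] z by simp
    then have "p v \<le> degA (wheel_mult n) ((A \<union> {0}) - S) v" using p1 vA by simp
    then show ?thesis using v by blast
  qed
  have "\<forall>v\<in>(A \<union> {0}) - {0}. 1 \<le> p v" using p1 by simp
  then show ?thesis unfolding parking_fn_def using A2 by blast
qed

lemma park_basic:
  assumes n: "n \<ge> 3" and pf: "parking_fn {0..n} 0 (wheel_mult n) p"
  shows "\<forall>v\<in>{1..n}. 1 \<le> p v \<and> p v \<le> 3" "\<exists>v\<in>{1..n}. p v = 1"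
proof -
  have pf1: "\<forall>v\<in>{1..n}. 1 \<le> p v" and
    pf2: "\<forall>S. S \<noteq> {} \<and> S \<subseteq> {1..n} \<longrightarrow> (\<exists>v\<in>S. p v \<le> degA (wheel_mult n) ({0..n} - S) v)"
    using pf unfolding parking_fn_def Vm0 by blast+
  show "\<forall>v\<in>{1..n}. 1 \<le> p v \<and> p v \<le> 3"
  proof
    fix v assume v: "v \<in> {1..n}"
    have "{v} \<noteq> {} \<and> {v} \<subseteq> {1..n}" using v by blast
    then have "p v \<le> degA (wheel_mult n) ({0..n} - {v}) v" using pf2 by blast
    moreover have "degA (wheel_mult n) ({0..n} - {v}) v \<le> 3"
      using deg_wheel[of n v "{0..n} - {v}"] n v by auto
    ultimately show "1 \<le> p v \<and> p v \<le> 3" using pf1 v by auto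
  qed
  have "{1..n} \<noteq> {} \<and> {1..n} \<subseteq> {1..n}" using n by auto
  then obtain v where v: "v \<in> {1..n}" "p v \<le> degA (wheel_mult n) ({0..n} - {1..n}) v" using pf2 by blast
  have "{0..n} - {1..n} = {0}" by auto
  then have "degA (wheel_mult n) ({0..n} - {1..n}) v = 1"
    using deg_wheel[of n v "{0}"] n v distinct3[of n v] by auto
  then show "\<exists>v\<in>{1..n}. p v = 1" using v pf1 by force
qed

lemma rot_main:
  assumes n: "n \<ge> 3" and pf: "parking_fn {0..n} 0 (wheel_mult n) p"
    and nd: "\<not> (\<exists>A B. decomposable {0..n} 0 (wheel_mult n) p A B)" and pn: "p n \<noteq> 1"
  shows "p n = 2 \<and> (\<forall>i\<in>{1..n-1}. p i = 1)"
proof -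
  let ?M = "wheel_mult n"
  have b13: "\<forall>v\<in>{1..n}. 1 \<le> p v \<and> p v \<le> 3" using park_basic(1)[OF n pf] .
  obtain v0 where v0: "v0 \<in> {1..n}" "p v0 = 1" using park_basic(2)[OF n pf] by blast
  define Os where "Os = {i \<in> {1..n-1}. p i = 1}"
  have v0O: "v0 \<in> Os" using v0 pn unfolding Os_def by (cases "v0 = n") auto
  have finO: "finite Os" unfolding Os_def by simp
  define k where "k = Max Os"
  have kO: "k \<in> Os" unfolding k_def using finO v0O Max_in by blast
  have kmax: "\<And>i. i \<in> Os \<Longrightarrow> i \<le> k" unfolding k_def using finO Max_ge by blast
  have k1: "1 \<le> k" "k \<le> n - 1" "p k = 1" using kO unfolding Os_def by auto
  have hk: "\<And>i. k < i \<Longrightarrow> i \<le> n - 1 \<Longrightarrow> p i \<noteq> 1"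
  proof
    fix i assume "k < i" "i \<le> n - 1" "p i = 1"
    then have "i \<in> Os" unfolding Os_def by auto
    then show False using kmax \<open>k < i\<close> by fastforce
  qed
  define J where "J = {i \<in> {1..k}. \<forall>l\<in>{i..k}. p l = 1}"
  have kJ: "k \<in> J" using k1 unfolding J_def by auto
  have finJ: "finite J" unfolding J_def by simp
  define j where "j = Min J"
  have jJ: "j \<in> J" unfolding j_def using finJ kJ Min_in by blast
  have jmin: "\<And>i. i \<in> J \<Longrightarrow> j \<le> i" unfolding j_def using finJ Min_le by blast
  have j1: "1 \<le> j" "j \<le> k" "\<forall>l\<in>{j..k}. p l = 1" using jJ unfolding J_def by auto
  have hj: "p (j - 1) \<noteq> 1" if "j \<ge> 2"
  proof
    assume a: "p (j - 1) = 1"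
    have "\<forall>l\<in>{j-1..k}. p l = 1"
    proof
      fix l assume "l \<in> {j-1..k}"
      then have "l = j - 1 \<or> l \<in> {j..k}" by auto
      then show "p l = 1" using a j1 by blast
    qed
    then have "j - 1 \<in> J" unfolding J_def using that j1 by auto
    then show False using jmin that by fastforce
  qed
  define A where "A = {j..k}"
  define B where "B = {1..n} - A"
  have key: "j = 1 \<and> k = n - 1 \<and> p n = 2"
  proof (rule ccontr)
    assume ne: "\<not> (j = 1 \<and> k = n - 1 \<and> p n = 2)"
    have AR: "A \<subseteq> {1..n}" unfolding A_def using j1 k1 by auto
    have finA: "finite A" "0 \<notin> A" unfolding A_def using j1 by auto
    have qB: "\<forall>v\<in>B. p v - degA ?M A v \<ge> 1"
    proof
      fix v assume vB: "v \<in> B"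
      have vR: "1 \<le> v" "v \<le> n" using vB unfolding B_def by auto
      have vA: "v < j \<or> k < v" using vB unfolding B_def A_def by auto
      have dg: "degA ?M A v = (if pw n v \<in> A then 1 else 0) + (if sc n v \<in> A then 1 else 0)"
        using deg_wheel[OF n vR finA(1)] finA(2) by simp
      have pv: "1 \<le> p v" "p v \<le> 3" using b13 vR by auto
      consider "v = n" | "k < v" "v < n" | "v = j - 1" "j \<ge> 2" | "v < j - 1"
        using vA vR k1 by linarith
      then show "p v - degA ?M A v \<ge> 1"
      proof cases
        case 1
        have d1: "pw n v = n - 1" "sc n v = 1" using 1 n unfolding pw_def sc_def by auto
        have "(n - 1 \<in> A) = (k = n - 1)" unfolding A_def using k1 j1 n by auto
        moreover have "(1 \<in> A) = (j = 1)" unfolding A_def using k1 j1 by auto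
        moreover have "p n \<ge> 2" using pn pv 1 by auto
        ultimately show ?thesis using dg d1 ne 1 pv by (auto split: if_splits)
      next
        case 2
        have "sc n v \<notin> A" using 2 unfolding sc_def A_def by auto
        moreover have "p v \<noteq> 1" using hk[of v] 2 by linarith
        then have "p v \<ge> 2" using pv by linarith
        ultimately show ?thesis using dg by (auto split: if_splits)
      next
        case 3
        have "pw n v \<notin> A" using 3 k1 n unfolding pw_def A_def by auto
        moreover have "p v \<noteq> 1" using hj 3 by blast
        then have "p v \<ge> 2" using pv by linarith
        ultimately show ?thesis using dg by (auto split: if_splits)
      next
        case 4
        have "pw n v \<notin> A" using 4 k1 n vR unfolding pw_def A_def by auto
        moreover have "sc n v \<notin> A" using 4 k1 n vR unfolding sc_def A_def by auto
        ultimately show ?thesis using dg pv by auto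
      qed
    qed
    have AB: "A \<noteq> {}" "B \<noteq> {}" "A \<inter> B = {}" "A \<union> B = {0..n} - {0}"
    proof -
      show "A \<noteq> {}" unfolding A_def using j1 by auto
      have "n \<in> B" unfolding B_def A_def using k1 n by auto
      then show "B \<noteq> {}" by blast
      show "A \<inter> B = {}" unfolding B_def by blast
      show "A \<union> B = {0..n} - {0}" unfolding B_def using AR by auto
    qed
    have pA: "parking_fn (A \<union> {0}) 0 ?M p" using ones_park[OF n AR] j1 unfolding A_def by blast
    have "decomposable {0..n} 0 ?M p A B"
      by (rule decomposable_of[OF _ _ pf AB pA qB]) auto
    then show False using nd by blast
  qed
  have "\<forall>i\<in>{1..n-1}. p i = 1" using key j1 by auto
  then show ?thesis using key by blast
qed

definition gfun :: "nat \<Rightarrow> nat \<Rightarrow> nat \<Rightarrow> int" where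
  "gfun n k = (\<lambda>i. if i \<in> {1..n} then (if i = k then 2 else 1) else 0)"

definition ffun :: "nat \<Rightarrow> nat \<Rightarrow> nat \<Rightarrow> int" where
  "ffun n k = (\<lambda>i. if i \<in> {1..n} then (if i = k then 1 else 2) else 0)"

lemma g_park:
  assumes n: "n \<ge> 3"
  shows "parking_fn {0..n} 0 (wheel_mult n) (gfun n k)"
proof -
  let ?M = "wheel_mult n"
  have A1: "\<forall>v\<in>{0..n} - {0}. 1 \<le> gfun n k v" unfolding gfun_def by auto
  have A2: "\<exists>v\<in>S. gfun n k v \<le> degA ?M ({0..n} - S) v"
    if S: "S \<noteq> {}" "S \<subseteq> {0..n} - {0}" for S
  proof (cases "\<exists>v\<in>S. v \<noteq> k")
    case True
    then obtain v where v: "v \<in> S" "v \<noteq> k" by blast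
    have vR: "1 \<le> v" "v \<le> n" using v S by auto
    have "0 \<in> {0..n} - S" using S by auto
    then have "degA ?M ({0..n} - S) v \<ge> 1" using deg_wheel[OF n vR, of "{0..n} - S"] by simp
    moreover have "gfun n k v = 1" using v vR unfolding gfun_def by auto
    ultimately have "gfun n k v \<le> degA ?M ({0..n} - S) v" by simp
    then show ?thesis using v(1) by blast
  next
    case False
    then have Sk: "S = {k}" using S by auto
    then have kR: "1 \<le> k" "k \<le> n" using S by auto
    have "degA ?M ({0..n} - S) k = 3"
      using deg_wheel[OF n kR, of "{0..n} - {k}"] Sk kR distinct3[OF n kR] pw_in[OF kR] sc_in[OF kR] by simp
    moreover have "gfun n k k = 2" using kR unfolding gfun_def by auto
    ultimately have "gfun n k k \<le> degA ?M ({0..n} - S) k" by simp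
    then show ?thesis using Sk by blast
  qed
  show ?thesis unfolding parking_fn_def using A1 A2 by blast
qed

lemma g_prime:
  assumes n: "n \<ge> 3"
  shows "prime_parking_fn {0..n} 0 (wheel_mult n) (gfun n k)"
proof -
  let ?M = "wheel_mult n"
  have "\<not> decomposable {0..n} 0 ?M (gfun n k) A B" for A B
  proof
    assume d: "decomposable {0..n} 0 ?M (gfun n k) A B"
    have AB: "A \<noteq> {}" "B \<noteq> {}" "A \<inter> B = {}" "A \<union> B = {1..n}"
      and pB: "parking_fn (B \<union> {0}) 0 ?M (\<lambda>v. gfun n k v - degA ?M A v)"
      using d unfolding decomposable_def Vm0 by blast+
    have q1: "\<forall>v\<in>B. 1 \<le> gfun n k v - degA ?M A v"
    proof -
      have "\<forall>v\<in>(B \<union> {0}) - {0}. 1 \<le> gfun n k v - degA ?M A v" using pB unfolding parking_fn_def by blast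
      moreover have "0 \<notin> B"
      proof
        assume "0 \<in> B" then have "0 \<in> A \<union> B" by blast
        then show False unfolding AB(4) by simp
      qed
      ultimately show ?thesis by auto
    qed
    have BR: "B \<subseteq> {1..n}" using AB(4) by blast
    have AR: "A \<subseteq> {1..n}" using AB(4) by blast
    have finA: "finite A" "0 \<notin> A"
    proof -
      show "finite A" using AR finite_subset by blast
      show "0 \<notin> A"
      proof
        assume "0 \<in> A" then have "0 \<in> A \<union> B" by blast
        then show False unfolding AB(4) by simp
      qed
    qed
    have BneR: "B \<noteq> {1..n}" using AB by blast
    obtain x where x: "x \<in> B" "sc n x \<notin> B" using sc_closed[OF BR AB(2)] BneR by blast
    obtain y where y: "y \<in> B" "pw n y \<notin> B" using pw_closed[OF BR AB(2)] BneR by blast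
    have xR: "1 \<le> x" "x \<le> n" using x BR by auto
    have yR: "1 \<le> y" "y \<le> n" using y BR by auto
    have "sc n x \<in> A \<union> B" unfolding AB(4) using sc_in[OF xR] by simp
    then have xA: "sc n x \<in> A" using x(2) by blast
    have "pw n y \<in> A \<union> B" unfolding AB(4) using pw_in[OF yR] by simp
    then have yA: "pw n y \<in> A" using y(2) by blast
    have dx: "degA ?M A x \<ge> 1" using deg_wheel[OF n xR finA(1)] xA by simp
    have dy: "degA ?M A y \<ge> 1" using deg_wheel[OF n yR finA(1)] yA by simp
    have "gfun n k x \<ge> 2" using q1 x(1) dx by fastforce
    then have xk: "x = k" unfolding gfun_def by (auto split: if_splits)
    have "gfun n k y \<ge> 2" using q1 y(1) dy by fastforce
    then have yk: "y = k" unfolding gfun_def by (auto split: if_splits)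
    have "degA ?M A k = 2" using deg_wheel[OF n xR finA(1)] xA yA xk yk finA(2) by simp
    moreover have "gfun n k k = 2" using xR xk unfolding gfun_def by auto
    ultimately show False using q1 x(1) xk by fastforce
  qed
  then show ?thesis unfolding prime_parking_fn_def using g_park[OF n] by blast
qed

lemma ppf_char:
  assumes n: "n \<ge> 3" and pp: "prime_parking_fn {0..n} 0 (wheel_mult n) p"
    and z: "\<forall>u. u \<notin> {0..n} - {0} \<longrightarrow> p u = 0"
  shows "\<exists>k\<in>{0..n}. p = gfun n k"
proof -
  let ?M = "wheel_mult n"
  have main: "p t = 2 \<and> (\<forall>j\<in>{1..n} - {t}. p j = 1)" if t: "t \<in> {1..n}" "p t \<noteq> 1" for t
  proof -
    define \<tau> where "\<tau> = rot n ^^ t"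
    have tp: "inj \<tau>" "\<tau> 0 = 0" "\<tau> ` {0..n} = {0..n}" "\<forall>x y. ?M (\<tau> x) (\<tau> y) = ?M x y"
      using rotp[OF n, of t] unfolding \<tau>_def by blast+
    have tn: "\<tau> n = t" unfolding \<tau>_def using rot_n t by auto
    have qp: "prime_parking_fn {0..n} 0 ?M (\<lambda>v. p (\<tau> v))" by (rule prime_fwd[OF pp tp])
    have "p (\<tau> n) \<noteq> 1" using tn t by simp
    then have r: "p (\<tau> n) = 2 \<and> (\<forall>i\<in>{1..n-1}. p (\<tau> i) = 1)"
      using rot_main[OF n, of "\<lambda>v. p (\<tau> v)"] qp unfolding prime_parking_fn_def by blast
    have "\<forall>j\<in>{1..n} - {t}. p j = 1"
    proof
      fix j assume j: "j \<in> {1..n} - {t}"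
      then have "j \<in> \<tau> ` {0..n}" using tp(3) by auto
      then obtain i where i: "i \<in> {0..n}" "j = \<tau> i" by blast
      have "i \<noteq> 0"
      proof
        assume "i = 0" then have "j = 0" using i(2) tp(2) by simp
        then show False using j by simp
      qed
      moreover have "i \<noteq> n" using i j tn by auto
      ultimately have "i \<in> {1..n-1}" using i by auto
      then show "p j = 1" using r i by auto
    qed
    then show ?thesis using r tn by simp
  qed
  show ?thesis
  proof (cases "\<exists>t\<in>{1..n}. p t \<noteq> 1")
    case True
    then obtain t where t: "t \<in> {1..n}" "p t \<noteq> 1" by blast
    have "p = gfun n t"
    proof
      fix u show "p u = gfun n t u"
        using main[OF t] z t unfolding gfun_def by (cases "u \<in> {1..n}") auto
    qed
    then show ?thesis using t by auto
  next
    case False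
    have "p = gfun n 0"
    proof
      fix u show "p u = gfun n 0 u"
        using False z unfolding gfun_def by (cases "u \<in> {1..n}") auto
    qed
    then show ?thesis by auto
  qed
qed

lemma PPF_eq:
  assumes n: "n \<ge> 3"
  shows "PPF {0..n} 0 (wheel_mult n) = gfun n ` {0..n}"
proof
  show "PPF {0..n} 0 (wheel_mult n) \<subseteq> gfun n ` {0..n}"
    using ppf_char[OF n] unfolding PPF_def by blast
  show "gfun n ` {0..n} \<subseteq> PPF {0..n} 0 (wheel_mult n)"
    unfolding PPF_def using g_prime[OF n] unfolding gfun_def by auto
qed

lemma g_inj: "inj_on (gfun n) {0..n}"
proof (rule inj_onI)
  fix a b assume ab: "a \<in> {0..n}" "b \<in> {0..n}" "gfun n a = gfun n b"
  show "a = b"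
  proof (rule ccontr)
    assume ne: "a \<noteq> b"
    show False
    proof (cases "a = 0")
      case True
      then have "b \<noteq> 0" using ne by simp
      then have "gfun n b b = 2" "gfun n a b = 1" using ab ne unfolding gfun_def by auto
      then show False using ab(3) by simp
    next
      case False
      then have "gfun n a a = 2" "gfun n b a = 1" using ab ne unfolding gfun_def by auto
      then show False using ab(3) by simp
    qed
  qed
qed

lemma f_inj: "inj_on (ffun n) {0..n}"
proof (rule inj_onI)
  fix a b assume ab: "a \<in> {0..n}" "b \<in> {0..n}" "ffun n a = ffun n b"
  show "a = b"
  proof (rule ccontr)
    assume ne: "a \<noteq> b"
    show False
    proof (cases "a = 0")
      case True
      then have "b \<noteq> 0" using ne by simp
      then have "ffun n b b = 1" "ffun n a b = 2" using ab ne unfolding ffun_def by auto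
      then show False using ab(3) by simp
    next
      case False
      then have "ffun n a a = 1" "ffun n b a = 2" using ab ne unfolding ffun_def by auto
      then show False using ab(3) by simp
    qed
  qed
qed

lemma sr_iff:
  assumes n: "n \<ge> 3"
  shows "strongly_recurrent {0..n} 0 (wheel_mult n) c \<longleftrightarrow>
            (\<forall>i\<in>{1..n}. c i \<in> {1, 2}) \<and> card {i \<in> {1..n}. c i = 1} \<le> 1"
  using sr_fwd[OF n] sr_bwd[OF n] by blast

lemma SR_eq:
  assumes n: "n \<ge> 3"
  shows "SR {0..n} 0 (wheel_mult n) = ffun n ` {0..n}"
proof
  show "SR {0..n} 0 (wheel_mult n) \<subseteq> ffun n ` {0..n}"
  proof
    fix c assume "c \<in> SR {0..n} 0 (wheel_mult n)"
    then have s: "strongly_recurrent {0..n} 0 (wheel_mult n) c" and z: "\<forall>u. u \<notin> {0..n} - {0} \<longrightarrow> c u = 0"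
      unfolding SR_def by blast+
    have vals: "\<forall>i\<in>{1..n}. c i \<in> {1, 2}" and cd: "card {i \<in> {1..n}. c i = 1} \<le> 1"
      using sr_fwd[OF n s] by blast+
    have uniq: "x = y" if "x \<in> {1..n}" "y \<in> {1..n}" "c x = 1" "c y = 1" for x y
      using cd card_le_Suc0_iff_eq[of "{i \<in> {1..n}. c i = 1}"] that by auto
    show "c \<in> ffun n ` {0..n}"
    proof (cases "\<exists>t\<in>{1..n}. c t = 1")
      case True
      then obtain t where t: "t \<in> {1..n}" "c t = 1" by blast
      have "c = ffun n t"
      proof
        fix u show "c u = ffun n t u"
        proof (cases "u \<in> {1..n}")
          case True
          show ?thesis
          proof (cases "u = t")
            case True then show ?thesis using t unfolding ffun_def by simp
          next
            case False
            then have "c u \<noteq> 1" using uniq[OF \<open>u \<in> {1..n}\<close> t(1) _ t(2)] by blast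
            moreover have "c u \<in> {1, 2}" using vals True by blast
            ultimately have "c u = 2" by simp
            then show ?thesis using True False unfolding ffun_def by simp
          qed
        next
          case False
          then have "u \<notin> {0..n} - {0}" by auto
          then have "c u = 0" using z by blast
          moreover have "ffun n t u = 0" unfolding ffun_def by (rule if_not_P[OF False])
          ultimately show ?thesis by simp
        qed
      qed
      then show ?thesis using t by auto
    next
      case False
      have "c = ffun n 0"
      proof
        fix u show "c u = ffun n 0 u"
        proof (cases "u \<in> {1..n}")
          case True
          then have "c u \<noteq> 1" using False by blast
          moreover have "c u \<in> {1, 2}" using vals True by blast
          ultimately have "c u = 2" by simp
          then show ?thesis using True unfolding ffun_def by simp
        next
          case F2: False
          then have "u \<notin> {0..n} - {0}" by auto
          then have "c u = 0" using z by blast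
          moreover have "ffun n 0 u = 0" unfolding ffun_def by (rule if_not_P[OF F2])
          ultimately show ?thesis by simp
        qed
      qed
      then show ?thesis by auto
    qed
  qed
  show "ffun n ` {0..n} \<subseteq> SR {0..n} 0 (wheel_mult n)"
  proof
    fix c assume "c \<in> ffun n ` {0..n}"
    then obtain k where k: "k \<in> {0..n}" "c = ffun n k" by blast
    have vals: "\<forall>i\<in>{1..n}. c i \<in> {1, 2}" unfolding k(2) ffun_def by auto
    have "{i \<in> {1..n}. c i = 1} \<subseteq> {k}" unfolding k(2) ffun_def by (auto split: if_splits)
    then have "card {i \<in> {1..n}. c i = 1} \<le> card {k}" by (intro card_mono) auto
    then have "card {i \<in> {1..n}. c i = 1} \<le> 1" by simp
    then have "strongly_recurrent {0..n} 0 (wheel_mult n) c" using sr_bwd[OF n vals] by blast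
    moreover have "\<forall>u. u \<notin> {0..n} - {0} \<longrightarrow> c u = 0" unfolding k(2) ffun_def by auto
    ultimately show "c \<in> SR {0..n} 0 (wheel_mult n)" unfolding SR_def by blast
  qed
qed

theorem proposition3p3:
  fixes n :: nat
  assumes "n \<ge> 3"
  shows "(\<forall>c :: nat \<Rightarrow> int. strongly_recurrent {0..n} 0 (wheel_mult n) c \<longleftrightarrow>
            (\<forall>i\<in>{1..n}. c i \<in> {1, 2}) \<and> card {i \<in> {1..n}. c i = 1} \<le> 1)
         \<and> card (SR {0..n} 0 (wheel_mult n)) = n + 1
         \<and> card (PPF {0..n} 0 (wheel_mult n)) = n + 1"
proof (intro conjI allI)
  fix c :: "nat \<Rightarrow> int"
  show "strongly_recurrent {0..n} 0 (wheel_mult n) c \<longleftrightarrow>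
            (\<forall>i\<in>{1..n}. c i \<in> {1, 2}) \<and> card {i \<in> {1..n}. c i = 1} \<le> 1"
    by (rule sr_iff[OF assms])
next
  show "card (SR {0..n} 0 (wheel_mult n)) = n + 1"
    unfolding SR_eq[OF assms] using card_image[OF f_inj[of n]] by simp
next
  show "card (PPF {0..n} 0 (wheel_mult n)) = n + 1"
    unfolding PPF_eq[OF assms] using card_image[OF g_inj[of n]] by simp
qed

end
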